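(* Let $t>0$. For all $n_1,\dots,n_k\ge0$, as polynomials in $x$, $$\prod_{j=1}^kU_{n_j}(x,t)=\sum_{\substack{\pi\in NC_{1,2}(n_1,\dots,n_k)\\ si(\pi)=0}}t^{s_2(\pi)}\,U_{s(\pi)}(x,t),$$ and consequently, with $n=\sum n_j$, $$\prod_{j=1}^kU_{n_j}(x,t)=\sum_{m=0}^nt^{(n-m)/2}\,|NC_2(n_1,\dots,n_k,m)|\,U_m(x,t).$$
   Context: The polynomials $U_m(x,t)$ (scaled Chebyshev polynomials of the second kind) are defined by $U_0=1$, $U_{-1}=0$, $xU_m(x,t)=U_{m+1}(x,t)+tU_{m-1}(x,t)$. For $n_1,\dots,n_r\ge0$ with sum $N$, $\mathcal P(n_1,\dots,n_r)$ is the set of partitions of $\{1,\dots,N\}$ no class of which contains two elements of the same consecutive interval when $\{1,\dots,N\}$ is split into consecutive intervals of lengths $n_1,\dots,n_r$. A partition is noncrossing if there are no $i<j<k<l$ with $i\sim k$, $j\sim l$, $i\not\sim j$. $NC_{1,2}(n_1,\dots,n_r)$ (resp. $NC_2(n_1,\dots,n_r)$) is the set of noncrossing $\pi\in\mathcal P(n_1,\dots,n_r)$ all of whose classes have one or two (resp. exactly two) elements. $s(\pi)$ is the number of one-element classes, $s_2(\pi)$ the number of two-element classes. A class $B$ of $\pi$ is inner if there is another class $C$ and $a,b\in C$ with $a<\min B$ and $\max B<b$, outer otherwise; $si(\pi)$ is the number of inner one-element classes. *)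

theory Defs
  imports "HOL-Computational_Algebra.Polynomial" "HOL-Library.Disjoint_Sets"
begin

fun chebU :: "nat \<Rightarrow> real \<Rightarrow> real poly" where
  "chebU 0 t = 1"
| "chebU (Suc 0) t = [:0, 1:]"
| "chebU (Suc (Suc m)) t = [:0, 1:] * chebU (Suc m) t - smult t (chebU m t)"

definition same_interval :: "nat list \<Rightarrow> nat \<Rightarrow> nat \<Rightarrow> bool" where
  "same_interval ns a b \<longleftrightarrow>
     (\<exists>j<length ns. sum_list (take j ns) < a \<and> a \<le> sum_list (take (Suc j) ns)
                  \<and> sum_list (take j ns) < b \<and> b \<le> sum_list (take (Suc j) ns))"

definition Parts :: "nat list \<Rightarrow> nat set set set" where
  "Parts ns = {p. partition_on {1..sum_list ns} p \<and>
     (\<forall>B\<in>p. \<forall>a\<in>B. \<forall>b\<in>B. a \<noteq> b \<longrightarrow> \<not> same_interval ns a b)}"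

definition equiv_in :: "nat set set \<Rightarrow> nat \<Rightarrow> nat \<Rightarrow> bool" where
  "equiv_in p a b \<longleftrightarrow> (\<exists>B\<in>p. a \<in> B \<and> b \<in> B)"

definition noncrossing :: "nat set set \<Rightarrow> bool" where
  "noncrossing p \<longleftrightarrow> \<not> (\<exists>i j k l. i < j \<and> j < k \<and> k < l \<and>
      equiv_in p i k \<and> equiv_in p j l \<and> \<not> equiv_in p i j)"

definition NC12 :: "nat list \<Rightarrow> nat set set set" where
  "NC12 ns = {p \<in> Parts ns. noncrossing p \<and> (\<forall>B\<in>p. card B = 1 \<or> card B = 2)}"

definition NC2 :: "nat list \<Rightarrow> nat set set set" where
  "NC2 ns = {p \<in> Parts ns. noncrossing p \<and> (\<forall>B\<in>p. card B = 2)}"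

definition singles :: "nat set set \<Rightarrow> nat" where
  "singles p = card {B \<in> p. card B = 1}"

definition pairs :: "nat set set \<Rightarrow> nat" where
  "pairs p = card {B \<in> p. card B = 2}"

definition inner_block :: "nat set set \<Rightarrow> nat set \<Rightarrow> bool" where
  "inner_block p B \<longleftrightarrow> (\<exists>C\<in>p. C \<noteq> B \<and> (\<exists>a\<in>C. \<exists>b\<in>C. a < Min B \<and> Max B < b))"

definition inner_singles :: "nat set set \<Rightarrow> nat" where
  "inner_singles p = card {B \<in> p. card B = 1 \<and> inner_block p B}"

end

theory Submission
  imports Defs
begin



lemma chebU_rec: "chebU (Suc (Suc m)) t = [:0, 1:] * chebU (Suc m) t - smult t (chebU m t)"
  by simp

lemma sc: "smult a p = [:a:] * p" by simp

lemma smult_sum_right: "smult a (sum f S) = (\<Sum>i\<in>S. smult a (f i))"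
  by (induction S rule: infinite_finite_induct) (auto simp: smult_add_right)

lemma chebU_prod_Suc:
  "chebU (Suc s) t * chebU (Suc n) t = chebU (s + n + 2) t + smult t (chebU s t * chebU n t)"
proof -
  have "\<forall>s. chebU (Suc s) t * chebU (Suc n) t = chebU (s + n + 2) t + smult t (chebU s t * chebU n t)
      \<and> chebU (Suc s) t * chebU (Suc (Suc n)) t = chebU (s + Suc n + 2) t + smult t (chebU s t * chebU (Suc n) t)"
  proof (induction n)
    case 0
    show ?case
    proof
      fix s
      have a: "chebU (Suc s) t * chebU (Suc 0) t = chebU (s + 0 + 2) t + smult t (chebU s t * chebU 0 t)"
        by (simp add: algebra_simps)
      moreover have "chebU (Suc s) t * chebU (Suc (Suc 0)) t = chebU (s + Suc 0 + 2) t + smult t (chebU s t * chebU (Suc 0) t)"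
      proof -
        have "chebU (Suc s) t * chebU (Suc (Suc 0)) t = [:0,1:] * (chebU (Suc s) t * [:0,1:]) - smult t (chebU (Suc s) t)"
          by (simp add: algebra_simps)
        also have "\<dots> = [:0,1:] * (chebU (Suc (Suc s)) t + smult t (chebU s t)) - smult t (chebU (Suc s) t)"
          using a by simp
        also have "\<dots> = chebU (s + Suc 0 + 2) t + smult t (chebU s t * chebU (Suc 0) t)"
          by (simp add: algebra_simps)
        finally show ?thesis .
      qed
      ultimately show "chebU (Suc s) t * chebU (Suc 0) t = chebU (s + 0 + 2) t + smult t (chebU s t * chebU 0 t)
      \<and> chebU (Suc s) t * chebU (Suc (Suc 0)) t = chebU (s + Suc 0 + 2) t + smult t (chebU s t * chebU (Suc 0) t)" by blast
    qed
  next
    case (Suc n)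
    show ?case
    proof
      fix s
      have h1: "chebU (Suc s) t * chebU (Suc n) t = chebU (s + n + 2) t + smult t (chebU s t * chebU n t)"
       and h2: "chebU (Suc s) t * chebU (Suc (Suc n)) t = chebU (s + Suc n + 2) t + smult t (chebU s t * chebU (Suc n) t)"
        using Suc by auto
      have "chebU (Suc s) t * chebU (Suc (Suc (Suc n))) t
          = [:0,1:] * (chebU (Suc s) t * chebU (Suc (Suc n)) t) - smult t (chebU (Suc s) t * chebU (Suc n) t)"
        by (simp add: algebra_simps)
      also have "\<dots> = [:0,1:] * (chebU (s + Suc n + 2) t + smult t (chebU s t * chebU (Suc n) t))
           - smult t (chebU (s + n + 2) t + smult t (chebU s t * chebU n t))"
        using h1 h2 by simp
      also have "\<dots> = chebU (s + Suc (Suc n) + 2) t + smult t (chebU s t * chebU (Suc (Suc n)) t)"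
      proof -
        have e: "\<And>Ua Ub Uc Ud Ue :: real poly. [:0,1:] * (Ua + smult t (Ud*Uc)) - smult t (Ub + smult t (Ud * Ue))
           = ([:0,1:]*Ua - smult t Ub) + smult t (Ud * ([:0,1:]*Uc - smult t Ue))"
          unfolding sc by algebra
        have e1: "chebU (s + Suc (Suc n) + 2) t = [:0,1:] * chebU (s + Suc n + 2) t - smult t (chebU (s + n + 2) t)"
          by (simp add: numeral_2_eq_2)
        have e2: "chebU (Suc (Suc n)) t = [:0,1:] * chebU (Suc n) t - smult t (chebU n t)" by simp
        show ?thesis unfolding e1 e2 e by (rule refl)
      qed
      finally show "chebU (Suc s) t * chebU (Suc (Suc n)) t = chebU (s + Suc n + 2) t + smult t (chebU s t * chebU (Suc n) t)
        \<and> chebU (Suc s) t * chebU (Suc (Suc (Suc n))) t = chebU (s + Suc (Suc n) + 2) t + smult t (chebU s t * chebU (Suc (Suc n)) t)"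
        using h2 by simp
    qed
  qed
  then show ?thesis by blast
qed

lemma chebU_lin:
  "chebU s t * chebU n t = (\<Sum>j = 0..min s n. smult (t ^ j) (chebU (s + n - 2 * j) t))"
proof (induction n arbitrary: s)
  case 0
  then show ?case by simp
next
  case (Suc n)
  show ?case
  proof (cases s)
    case 0
    then show ?thesis by simp
  next
    case (Suc s')
    have "chebU s t * chebU (Suc n) t = chebU (s' + n + 2) t + smult t (chebU s' t * chebU n t)"
      using Suc chebU_prod_Suc by simp
    also have "\<dots> = chebU (s' + n + 2) t + (\<Sum>j = 0..min s' n. smult (t ^ Suc j) (chebU (s' + n - 2 * j) t))"
      using Suc.IH[of s'] by (simp add: smult_sum_right)
    also have "\<dots> = (\<Sum>j = 0..Suc (min s' n). smult (t ^ j) (chebU (s + Suc n - 2 * j) t))"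
      by (subst sum.atLeast0_atMost_Suc_shift) (simp add: Suc)
    finally show ?thesis using Suc by simp
  qed
qed




definition Pa :: "(nat \<Rightarrow> nat) \<Rightarrow> nat set \<Rightarrow> nat set set" where
  "Pa \<sigma> A = (\<lambda>x. {x, \<sigma> x}) ` A"

definition invol :: "nat set \<Rightarrow> (nat \<Rightarrow> nat) \<Rightarrow> bool" where
  "invol A \<sigma> \<longleftrightarrow> (\<forall>x. x \<notin> A \<longrightarrow> \<sigma> x = x) \<and> (\<forall>x\<in>A. \<sigma> x \<in> A) \<and> (\<forall>x. \<sigma> (\<sigma> x) = x)"

lemma involD:
  assumes "invol A \<sigma>"
  shows "\<And>x. x \<notin> A \<Longrightarrow> \<sigma> x = x" "\<And>x. x \<in> A \<Longrightarrow> \<sigma> x \<in> A" "\<And>x. \<sigma> (\<sigma> x) = x"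
  using assms by (auto simp: invol_def)

lemma Pa_mem: "B \<in> Pa \<sigma> A \<longleftrightarrow> (\<exists>x\<in>A. B = {x, \<sigma> x})"
  by (auto simp: Pa_def)

lemma invol_block_eq:
  assumes "invol A \<sigma>" "z \<in> {x, \<sigma> x}"
  shows "{x, \<sigma> x} = {z, \<sigma> z}"
  using assms involD(3)[OF assms(1)] by auto

lemma T1: assumes "invol A \<sigma>" shows "partition_on A (Pa \<sigma> A)"
proof (rule partition_onI)
  show "\<Union> (Pa \<sigma> A) = A" using involD[OF assms] by (auto simp: Pa_def)
  show "{} \<notin> Pa \<sigma> A" by (auto simp: Pa_def)
  fix p q assume "p \<in> Pa \<sigma> A" "q \<in> Pa \<sigma> A" "p \<noteq> q"
  then obtain x y where "p = {x, \<sigma> x}" "q = {y, \<sigma> y}" by (auto simp: Pa_def)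
  then show "disjnt p q"
    using \<open>p \<noteq> q\<close> invol_block_eq[OF assms, of _ x] invol_block_eq[OF assms, of _ y]
    unfolding disjnt_def by blast
qed

lemma T2: assumes "invol A \<sigma>"
  shows "equiv_in (Pa \<sigma> A) a b \<longleftrightarrow> a \<in> A \<and> (b = a \<or> b = \<sigma> a)"
proof
  assume "equiv_in (Pa \<sigma> A) a b"
  then obtain x where x: "x \<in> A" "a \<in> {x, \<sigma> x}" "b \<in> {x, \<sigma> x}" by (auto simp: equiv_in_def Pa_def)
  then have "{x, \<sigma> x} = {a, \<sigma> a}" using invol_block_eq[OF assms] by blast
  moreover have "a \<in> A" using x involD[OF assms] by auto
  ultimately show "a \<in> A \<and> (b = a \<or> b = \<sigma> a)" using x by auto
next
  assume "a \<in> A \<and> (b = a \<or> b = \<sigma> a)"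
  then show "equiv_in (Pa \<sigma> A) a b" by (auto simp: equiv_in_def Pa_def)
qed

lemma T3a: assumes "B \<in> Pa \<sigma> A" shows "card B = 1 \<or> card B = 2"
proof -
  obtain x where "B = {x, \<sigma> x}" using assms by (auto simp: Pa_def)
  then show ?thesis by (cases "x = \<sigma> x") auto
qed

lemma T3c: assumes "invol A \<sigma>"
  shows "noncrossing (Pa \<sigma> A) \<longleftrightarrow> (\<forall>i k. \<not> (i < k \<and> k < \<sigma> i \<and> \<sigma> i < \<sigma> k))"
proof
  assume nc: "noncrossing (Pa \<sigma> A)"
  show "\<forall>i k. \<not> (i < k \<and> k < \<sigma> i \<and> \<sigma> i < \<sigma> k)"
  proof (intro allI notI)
    fix i k assume h: "i < k \<and> k < \<sigma> i \<and> \<sigma> i < \<sigma> k"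
    have "i \<in> A" using h involD(1)[OF assms, of i] by auto
    moreover have "k \<in> A" using h involD(1)[OF assms, of k] by auto
    ultimately have "equiv_in (Pa \<sigma> A) i (\<sigma> i)" "equiv_in (Pa \<sigma> A) k (\<sigma> k)"
       "\<not> equiv_in (Pa \<sigma> A) i k"
      using h by (auto simp: T2[OF assms])
    then show False using nc h unfolding noncrossing_def by blast
  qed
next
  assume h: "\<forall>i k. \<not> (i < k \<and> k < \<sigma> i \<and> \<sigma> i < \<sigma> k)"
  show "noncrossing (Pa \<sigma> A)"
    unfolding noncrossing_def T2[OF assms] using h by auto
qed

lemma T3d: assumes "invol {1..M} \<sigma>"
  shows "inner_singles (Pa \<sigma> {1..M}) = 0 \<longleftrightarrow> (\<forall>x y. \<sigma> x = x \<longrightarrow> y < x \<longrightarrow> x < \<sigma> y \<longrightarrow> False)"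
proof -
  note I = involD[OF assms]
  have fin: "finite {B \<in> Pa \<sigma> {1..M}. card B = 1 \<and> inner_block (Pa \<sigma> {1..M}) B}"
    by (auto simp: Pa_def)
  have "{B \<in> Pa \<sigma> {1..M}. card B = 1 \<and> inner_block (Pa \<sigma> {1..M}) B} = {} \<longleftrightarrow>
      (\<forall>x y. \<sigma> x = x \<longrightarrow> y < x \<longrightarrow> x < \<sigma> y \<longrightarrow> False)"
  proof
    assume e: "{B \<in> Pa \<sigma> {1..M}. card B = 1 \<and> inner_block (Pa \<sigma> {1..M}) B} = {}"
    show "\<forall>x y. \<sigma> x = x \<longrightarrow> y < x \<longrightarrow> x < \<sigma> y \<longrightarrow> False"
    proof (intro allI impI)
      fix x y assume h: "\<sigma> x = x" "y < x" "x < \<sigma> y"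
      have y: "y \<in> {1..M}" using h I(1)[of y] by (cases "y \<in> {1..M}") auto
      then have "\<sigma> y \<in> {1..M}" using I(2) by auto
      then have x: "x \<in> {1..M}" using h y by auto
      have "{x} \<in> Pa \<sigma> {1..M}" using x h by (auto simp: Pa_def intro!: image_eqI[of _ _ x])
      moreover have "inner_block (Pa \<sigma> {1..M}) {x}"
        unfolding inner_block_def
        using y h by (intro bexI[of _ "{y, \<sigma> y}"]) (auto simp: Pa_def)
      ultimately show False using e by auto
    qed
  next
    assume h: "\<forall>x y. \<sigma> x = x \<longrightarrow> y < x \<longrightarrow> x < \<sigma> y \<longrightarrow> False"
    show "{B \<in> Pa \<sigma> {1..M}. card B = 1 \<and> inner_block (Pa \<sigma> {1..M}) B} = {}"
    proof (rule ccontr)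
      assume "{B \<in> Pa \<sigma> {1..M}. card B = 1 \<and> inner_block (Pa \<sigma> {1..M}) B} \<noteq> {}"
      then obtain x where x: "x \<in> {1..M}" "card {x, \<sigma> x} = 1" "inner_block (Pa \<sigma> {1..M}) {x, \<sigma> x}"
        by (auto simp: Pa_def)
      then have sx: "\<sigma> x = x" by (cases "\<sigma> x = x") auto
      then obtain C a b where C: "C \<in> Pa \<sigma> {1..M}" "a \<in> C" "b \<in> C" "a < x" "x < b"
        using x unfolding inner_block_def by auto
      then obtain y where "C = {y, \<sigma> y}" by (auto simp: Pa_def)
      then have "(a = y \<and> b = \<sigma> y) \<or> (a = \<sigma> y \<and> b = \<sigma> (\<sigma> y))" using C I(3)[of y] by auto
      then show False using h sx C by metis
    qed
  qed
  then show ?thesis unfolding inner_singles_def using fin by simp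
qed

lemma T5: assumes "invol A \<sigma>" "invol A \<tau>" "Pa \<sigma> A = Pa \<tau> A" shows "\<sigma> = \<tau>"
proof
  fix x
  show "\<sigma> x = \<tau> x"
  proof (cases "x \<in> A")
    case False then show ?thesis using involD(1)[OF assms(1)] involD(1)[OF assms(2)] by simp
  next
    case True
    then have "{x, \<sigma> x} \<in> Pa \<tau> A" using assms(3) by (auto simp: Pa_def)
    then obtain y where "{x, \<sigma> x} = {y, \<tau> y}" by (auto simp: Pa_def)
    then have "{x, \<sigma> x} = {x, \<tau> x}" using invol_block_eq[OF assms(2), of x y] by auto
    then show ?thesis by (metis doubleton_eq_iff)
  qed
qed

lemma T6s: assumes "invol A \<sigma>" "finite A"
  shows "singles (Pa \<sigma> A) = card {x \<in> A. \<sigma> x = x}"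
proof -
  have "{B \<in> Pa \<sigma> A. card B = 1} = (\<lambda>x. {x}) ` {x \<in> A. \<sigma> x = x}"
  proof
    show "{B \<in> Pa \<sigma> A. card B = 1} \<subseteq> (\<lambda>x. {x}) ` {x \<in> A. \<sigma> x = x}"
    proof
      fix B assume "B \<in> {B \<in> Pa \<sigma> A. card B = 1}"
      then obtain x where "x \<in> A" "B = {x, \<sigma> x}" "card {x, \<sigma> x} = 1" by (auto simp: Pa_def)
      then show "B \<in> (\<lambda>x. {x}) ` {x \<in> A. \<sigma> x = x}" by (cases "\<sigma> x = x") auto
    qed
  qed (auto simp: Pa_def)
  then show ?thesis unfolding singles_def by (simp add: card_image)
qed

lemma T6p: assumes "invol A \<sigma>" "finite A"
  shows "pairs (Pa \<sigma> A) = card {x \<in> A. x < \<sigma> x}"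
proof -
  note I = involD[OF assms(1)]
  have "{B \<in> Pa \<sigma> A. card B = 2} = (\<lambda>x. {x, \<sigma> x}) ` {x \<in> A. x < \<sigma> x}"
  proof
    show "{B \<in> Pa \<sigma> A. card B = 2} \<subseteq> (\<lambda>x. {x, \<sigma> x}) ` {x \<in> A. x < \<sigma> x}"
    proof
      fix B assume "B \<in> {B \<in> Pa \<sigma> A. card B = 2}"
      then obtain x where x: "x \<in> A" "B = {x, \<sigma> x}" "card {x, \<sigma> x} = 2" by (auto simp: Pa_def)
      then have "\<sigma> x \<noteq> x" by auto
      then consider "x < \<sigma> x" | "\<sigma> x < x" by linarith
      then show "B \<in> (\<lambda>x. {x, \<sigma> x}) ` {x \<in> A. x < \<sigma> x}"
      proof cases
        case 1 then show ?thesis using x by auto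
      next
        case 2 then show ?thesis using x I(2)[of x] I(3)[of x]
          by (intro image_eqI[of _ _ "\<sigma> x"]) auto
      qed
    qed
  qed (auto simp: Pa_def)
  moreover have "inj_on (\<lambda>x. {x, \<sigma> x}) {x \<in> A. x < \<sigma> x}"
  proof (rule inj_onI)
    fix x y assume "x \<in> {x \<in> A. x < \<sigma> x}" "y \<in> {x \<in> A. x < \<sigma> x}" "{x, \<sigma> x} = {y, \<sigma> y}"
    then show "x = y" by (metis (no_types, lifting) doubleton_eq_iff mem_Collect_eq order.asym)
  qed
  ultimately show ?thesis unfolding pairs_def by (simp add: card_image)
qed

lemma T4: assumes "partition_on A p" "\<forall>B\<in>p. card B = 1 \<or> card B = 2"
  shows "\<exists>\<sigma>. invol A \<sigma> \<and> p = Pa \<sigma> A"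
proof -
  define \<sigma> where "\<sigma> x = (if x \<in> A \<and> (\<exists>y. y \<noteq> x \<and> equiv_in p x y) then (SOME y. y \<noteq> x \<and> equiv_in p x y) else x)" for x
  have uniq: "B = C" if "B \<in> p" "C \<in> p" "x \<in> B" "x \<in> C" for B C x
    using assms(1) that unfolding partition_on_def disjoint_def by blast
  have key: "B = {x, \<sigma> x}" if B: "B \<in> p" "x \<in> B" for B x
  proof -
    have xA: "x \<in> A" using B assms(1) partition_onD1 by blast
    have "card B = 1 \<or> card B = 2" using assms(2) B by auto
    then show ?thesis
    proof
      assume "card B = 1"
      then have Bx: "B = {x}" using B by (auto simp: card_Suc_eq)
      have nex: "\<not> (\<exists>y. y \<noteq> x \<and> equiv_in p x y)"
        unfolding equiv_in_def using uniq[OF B(1)] B Bx by blast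
      have "\<not> (x \<in> A \<and> (\<exists>y. y \<noteq> x \<and> equiv_in p x y))" using nex by blast
      then have "\<sigma> x = x" by (simp only: \<sigma>_def if_not_P if_False)
      then show ?thesis using Bx by simp
    next
      assume "card B = 2"
      then obtain a b where ab: "B = {a, b}" "a \<noteq> b" by (auto simp: card_2_iff)
      then obtain y where y: "B = {x, y}" "y \<noteq> x" using B by auto
      have ex: "\<exists>y. y \<noteq> x \<and> equiv_in p x y" using y B unfolding equiv_in_def by blast
      have "\<forall>z. z \<noteq> x \<and> equiv_in p x z \<longrightarrow> z = y"
        unfolding equiv_in_def using uniq[OF B(1)] B y by blast
      note u = this
      have "\<sigma> x = (SOME z. z \<noteq> x \<and> equiv_in p x z)"
        using xA ex by (simp only: \<sigma>_def if_P conj_absorb simp_thms)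
      moreover have "(SOME z. z \<noteq> x \<and> equiv_in p x z) \<noteq> x \<and> equiv_in p x (SOME z. z \<noteq> x \<and> equiv_in p x z)"
        by (rule someI_ex[OF ex])
      ultimately have "\<sigma> x = y" using u by simp
      then show ?thesis using y by simp
    qed
  qed
  have inv: "invol A \<sigma>"
    unfolding invol_def
  proof (intro conjI allI ballI impI)
    fix x assume "x \<notin> A"
    then have "\<not> (x \<in> A \<and> (\<exists>y. y \<noteq> x \<and> equiv_in p x y))" by blast
    then show "\<sigma> x = x" by (simp only: \<sigma>_def if_not_P if_False)
  next
    fix x assume "x \<in> A"
    then obtain B where B: "B \<in> p" "x \<in> B" using assms(1) partition_onD1 by blast
    then show "\<sigma> x \<in> A" using key[OF B] assms(1) partition_onD1 by blast
  next
    fix x show "\<sigma> (\<sigma> x) = x"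
    proof (cases "x \<in> A")
      case False
      then have "\<not> (x \<in> A \<and> (\<exists>y. y \<noteq> x \<and> equiv_in p x y))" by blast
      then have "\<sigma> x = x" by (simp only: \<sigma>_def if_not_P if_False)
      then show ?thesis by simp
    next
      case True
      then obtain B where B: "B \<in> p" "x \<in> B" using assms(1) partition_onD1 by blast
      have k1: "B = {x, \<sigma> x}" using key[OF B] .
      then have "\<sigma> x \<in> B" by auto
      then have "B = {\<sigma> x, \<sigma> (\<sigma> x)}" using key[OF B(1), of "\<sigma> x"] by blast
      then show ?thesis using k1 by (metis doubleton_eq_iff insertI1 insert_commute)
    qed
  qed
  have "p = Pa \<sigma> A"
  proof
    show "p \<subseteq> Pa \<sigma> A"
    proof
      fix B assume "B \<in> p"
      moreover then obtain x where "x \<in> B" using assms(1) partition_onD3 by fastforce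
      moreover then have "x \<in> A" using \<open>B \<in> p\<close> assms(1) partition_onD1 by blast
      ultimately show "B \<in> Pa \<sigma> A" using key[of B x] unfolding Pa_def by blast
    qed
  next
    show "Pa \<sigma> A \<subseteq> p"
    proof
      fix B assume "B \<in> Pa \<sigma> A"
      then obtain x where x: "x \<in> A" "B = {x, \<sigma> x}" by (auto simp: Pa_def)
      then obtain C where C: "C \<in> p" "x \<in> C" using assms(1) partition_onD1 by blast
      then show "B \<in> p" using key[OF C] x by simp
    qed
  qed
  then show ?thesis using inv by blast
qed




definition okinv :: "nat list \<Rightarrow> (nat \<Rightarrow> nat) \<Rightarrow> bool" where
  "okinv ns \<sigma> \<longleftrightarrow> invol {1..sum_list ns} \<sigma>
     \<and> (\<forall>x\<in>{1..sum_list ns}. \<sigma> x \<noteq> x \<longrightarrow> \<not> same_interval ns x (\<sigma> x))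
     \<and> (\<forall>i k. \<not> (i < k \<and> k < \<sigma> i \<and> \<sigma> i < \<sigma> k))
     \<and> (\<forall>x y. \<sigma> x = x \<longrightarrow> y < x \<longrightarrow> x < \<sigma> y \<longrightarrow> False)"

lemma si_sym: "same_interval ns a b \<longleftrightarrow> same_interval ns b a"
  unfolding same_interval_def by blast

lemma Parts_Pa: assumes "invol {1..sum_list ns} \<sigma>"
  shows "Pa \<sigma> {1..sum_list ns} \<in> Parts ns \<longleftrightarrow>
     (\<forall>x\<in>{1..sum_list ns}. \<sigma> x \<noteq> x \<longrightarrow> \<not> same_interval ns x (\<sigma> x))"
  unfolding Parts_def using T1[OF assms] si_sym[of ns]
  by (auto simp: Pa_def)

lemma V_eq: "{p \<in> NC12 ns. inner_singles p = 0} = (\<lambda>\<sigma>. Pa \<sigma> {1..sum_list ns}) ` {\<sigma>. okinv ns \<sigma>}"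
proof
  show "{p \<in> NC12 ns. inner_singles p = 0} \<subseteq> (\<lambda>\<sigma>. Pa \<sigma> {1..sum_list ns}) ` {\<sigma>. okinv ns \<sigma>}"
  proof
    fix p assume p: "p \<in> {p \<in> NC12 ns. inner_singles p = 0}"
    then obtain \<sigma> where s: "invol {1..sum_list ns} \<sigma>" "p = Pa \<sigma> {1..sum_list ns}"
      using T4[of "{1..sum_list ns}" p] by (auto simp: NC12_def Parts_def)
    have "okinv ns \<sigma>" unfolding okinv_def
      using p s Parts_Pa[OF s(1)] T3c[OF s(1)] T3d[OF s(1)] by (auto simp: NC12_def)
    then show "p \<in> (\<lambda>\<sigma>. Pa \<sigma> {1..sum_list ns}) ` {\<sigma>. okinv ns \<sigma>}" using s by auto
  qed
next
  show "(\<lambda>\<sigma>. Pa \<sigma> {1..sum_list ns}) ` {\<sigma>. okinv ns \<sigma>} \<subseteq> {p \<in> NC12 ns. inner_singles p = 0}"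
  proof
    fix p assume "p \<in> (\<lambda>\<sigma>. Pa \<sigma> {1..sum_list ns}) ` {\<sigma>. okinv ns \<sigma>}"
    then obtain \<sigma> where s: "okinv ns \<sigma>" "p = Pa \<sigma> {1..sum_list ns}" by auto
    then have i: "invol {1..sum_list ns} \<sigma>" by (simp add: okinv_def)
    show "p \<in> {p \<in> NC12 ns. inner_singles p = 0}"
      using s Parts_Pa[OF i] T3c[OF i] T3d[OF i] T3a[of _ \<sigma>] by (auto simp: NC12_def okinv_def)
  qed
qed

lemma NC2_eq: "NC2 ns = (\<lambda>\<sigma>. Pa \<sigma> {1..sum_list ns}) ` {\<sigma>. okinv ns \<sigma> \<and> (\<forall>x\<in>{1..sum_list ns}. \<sigma> x \<noteq> x)}"
proof
  show "NC2 ns \<subseteq> (\<lambda>\<sigma>. Pa \<sigma> {1..sum_list ns}) ` {\<sigma>. okinv ns \<sigma> \<and> (\<forall>x\<in>{1..sum_list ns}. \<sigma> x \<noteq> x)}"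
  proof
    fix p assume p: "p \<in> NC2 ns"
    then obtain \<sigma> where s: "invol {1..sum_list ns} \<sigma>" "p = Pa \<sigma> {1..sum_list ns}"
      using T4[of "{1..sum_list ns}" p] by (auto simp: NC2_def Parts_def)
    have nf: "\<forall>x\<in>{1..sum_list ns}. \<sigma> x \<noteq> x"
    proof
      fix x assume x: "x \<in> {1..sum_list ns}"
      then have "{x, \<sigma> x} \<in> p" using s by (auto simp: Pa_def)
      then have "card {x, \<sigma> x} = 2" using p by (auto simp: NC2_def)
      then show "\<sigma> x \<noteq> x" by auto
    qed
    have v5: "\<forall>x y. \<sigma> x = x \<longrightarrow> y < x \<longrightarrow> x < \<sigma> y \<longrightarrow> False"
    proof (intro allI impI)
      fix x y assume h: "\<sigma> x = x" "y < x" "x < \<sigma> y"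
      have "y \<in> {1..sum_list ns}" using h involD(1)[OF s(1), of y] by (cases "y \<in> {1..sum_list ns}") auto
      then have "\<sigma> y \<in> {1..sum_list ns}" using involD(2)[OF s(1)] by auto
      then have "x \<in> {1..sum_list ns}" using h \<open>y \<in> {1..sum_list ns}\<close> by auto
      then show False using nf h by auto
    qed
    have "okinv ns \<sigma>" unfolding okinv_def
      using p s Parts_Pa[OF s(1)] T3c[OF s(1)] nf s(1) v5 by (auto simp: NC2_def)
    then show "p \<in> (\<lambda>\<sigma>. Pa \<sigma> {1..sum_list ns}) ` {\<sigma>. okinv ns \<sigma> \<and> (\<forall>x\<in>{1..sum_list ns}. \<sigma> x \<noteq> x)}"
      using s nf by auto
  qed
next
  show "(\<lambda>\<sigma>. Pa \<sigma> {1..sum_list ns}) ` {\<sigma>. okinv ns \<sigma> \<and> (\<forall>x\<in>{1..sum_list ns}. \<sigma> x \<noteq> x)} \<subseteq> NC2 ns"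
  proof
    fix p assume "p \<in> (\<lambda>\<sigma>. Pa \<sigma> {1..sum_list ns}) ` {\<sigma>. okinv ns \<sigma> \<and> (\<forall>x\<in>{1..sum_list ns}. \<sigma> x \<noteq> x)}"
    then obtain \<sigma> where s: "okinv ns \<sigma>" "\<forall>x\<in>{1..sum_list ns}. \<sigma> x \<noteq> x" "p = Pa \<sigma> {1..sum_list ns}" by auto
    then have i: "invol {1..sum_list ns} \<sigma>" by (simp add: okinv_def)
    show "p \<in> NC2 ns"
      using s Parts_Pa[OF i] T3c[OF i] by (auto simp: NC2_def okinv_def Pa_def)
  qed
qed

lemma inj_Pa: "inj_on (\<lambda>\<sigma>. Pa \<sigma> A) {\<sigma>. invol A \<sigma>}"
  by (rule inj_onI) (auto intro: T5)

lemma inj_Pa_ok: "inj_on (\<lambda>\<sigma>. Pa \<sigma> {1..sum_list ns}) {\<sigma>. okinv ns \<sigma>}"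
  by (rule inj_on_subset[OF inj_Pa]) (auto simp: okinv_def)

lemma finite_invol: assumes "finite A" shows "finite {\<sigma>. invol A \<sigma>}"
proof -
  have "inj_on (\<lambda>\<sigma>. restrict \<sigma> A) {\<sigma>. invol A \<sigma>}"
  proof (rule inj_onI)
    fix \<sigma> \<tau> assume "\<sigma> \<in> {\<sigma>. invol A \<sigma>}" "\<tau> \<in> {\<sigma>. invol A \<sigma>}" "restrict \<sigma> A = restrict \<tau> A"
    then show "\<sigma> = \<tau>" by (metis ext involD(1) mem_Collect_eq restrict_apply')
  qed
  moreover have "(\<lambda>\<sigma>. restrict \<sigma> A) ` {\<sigma>. invol A \<sigma>} \<subseteq> PiE A (\<lambda>_. A)"
    by (auto simp: invol_def)
  moreover have "finite (PiE A (\<lambda>_. A))" using assms by (simp add: finite_PiE)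
  ultimately show ?thesis by (meson finite_imageD finite_subset)
qed

lemma finite_okinv: "finite {\<sigma>. okinv ns \<sigma>}"
  by (rule finite_subset[OF _ finite_invol[of "{1..sum_list ns}"]]) (auto simp: okinv_def)

lemma sum_take_le: "sum_list (take j ns) \<le> sum_list (ns :: nat list)"
proof -
  have "sum_list ns = sum_list (take j ns) + sum_list (drop j ns)"
    by (metis append_take_drop_id sum_list_append)
  then show ?thesis by linarith
qed

lemma SI:
  fixes ns :: "nat list"
  assumes "1 \<le> a" "a \<le> sum_list ns + n" "1 \<le> b" "b \<le> sum_list ns + n"
  shows "same_interval (ns @ [n]) a b \<longleftrightarrow>
    (a \<le> sum_list ns \<and> b \<le> sum_list ns \<and> same_interval ns a b) \<or> (sum_list ns < a \<and> sum_list ns < b)"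
proof
  assume "same_interval (ns @ [n]) a b"
  then obtain j where j: "j < Suc (length ns)"
    "sum_list (take j (ns @ [n])) < a" "a \<le> sum_list (take (Suc j) (ns @ [n]))"
    "sum_list (take j (ns @ [n])) < b" "b \<le> sum_list (take (Suc j) (ns @ [n]))"
    unfolding same_interval_def by auto
  show "(a \<le> sum_list ns \<and> b \<le> sum_list ns \<and> same_interval ns a b) \<or> (sum_list ns < a \<and> sum_list ns < b)"
  proof (cases "j = length ns")
    case True
    then show ?thesis using j by simp
  next
    case False
    then have jl: "j < length ns" using j by simp
    then have t: "take j (ns @ [n]) = take j ns" "take (Suc j) (ns @ [n]) = take (Suc j) ns" by auto
    have "sum_list (take (Suc j) ns) \<le> sum_list ns" by (rule sum_take_le)
    then show ?thesis using j jl unfolding t same_interval_def by auto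
  qed
next
  assume h: "(a \<le> sum_list ns \<and> b \<le> sum_list ns \<and> same_interval ns a b) \<or> (sum_list ns < a \<and> sum_list ns < b)"
  then show "same_interval (ns @ [n]) a b"
  proof
    assume "a \<le> sum_list ns \<and> b \<le> sum_list ns \<and> same_interval ns a b"
    then obtain j where j: "j < length ns"
      "sum_list (take j ns) < a" "a \<le> sum_list (take (Suc j) ns)"
      "sum_list (take j ns) < b" "b \<le> sum_list (take (Suc j) ns)"
      unfolding same_interval_def by auto
    then have t: "take j (ns @ [n]) = take j ns" "take (Suc j) (ns @ [n]) = take (Suc j) ns" by auto
    show ?thesis unfolding same_interval_def
      by (rule exI[of _ j]) (use j t in auto)
  next
    assume "sum_list ns < a \<and> sum_list ns < b"
    then show ?thesis unfolding same_interval_def using assms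
      by (intro exI[of _ "length ns"]) auto
  qed
qed




definition Ofix :: "nat \<Rightarrow> (nat \<Rightarrow> nat) \<Rightarrow> nat set" where
  "Ofix N \<sigma> = {x \<in> {1..N}. \<sigma> x = x}"

definition rk :: "nat \<Rightarrow> (nat \<Rightarrow> nat) \<Rightarrow> nat \<Rightarrow> nat" where
  "rk N \<sigma> x = card {y \<in> Ofix N \<sigma>. x < y}"

definition rho :: "nat \<Rightarrow> (nat \<Rightarrow> nat) \<Rightarrow> nat \<Rightarrow> nat" where
  "rho N \<sigma> i = the_inv_into (Ofix N \<sigma>) (rk N \<sigma>) i"

definition ext :: "nat \<Rightarrow> (nat \<Rightarrow> nat) \<Rightarrow> nat \<Rightarrow> nat \<Rightarrow> nat" where
  "ext N \<sigma> j x = (if x \<in> Ofix N \<sigma> \<and> rk N \<sigma> x < j then N + 1 + rk N \<sigma> x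
      else if N < x \<and> x \<le> N + j then rho N \<sigma> (x - N - 1) else \<sigma> x)"

definition restr :: "nat \<Rightarrow> (nat \<Rightarrow> nat) \<Rightarrow> nat \<Rightarrow> nat" where
  "restr N \<tau> x = (if x \<le> N \<and> \<tau> x \<le> N then \<tau> x else x)"

lemma finite_Ofix[simp]: "finite (Ofix N \<sigma>)"
  by (auto simp: Ofix_def)

lemma rk_anti: assumes "x \<in> Ofix N \<sigma>" "y \<in> Ofix N \<sigma>" "x < y" shows "rk N \<sigma> y < rk N \<sigma> x"
  unfolding rk_def
  by (rule psubset_card_mono) (use assms in auto)

lemma rk_inj: "inj_on (rk N \<sigma>) (Ofix N \<sigma>)"
proof (rule inj_onI)
  fix x y assume "x \<in> Ofix N \<sigma>" "y \<in> Ofix N \<sigma>" "rk N \<sigma> x = rk N \<sigma> y"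
  then show "x = y" using rk_anti[of x N \<sigma> y] rk_anti[of y N \<sigma> x] by (cases x y rule: linorder_cases) auto
qed

lemma rk_lt: assumes "x \<in> Ofix N \<sigma>" shows "rk N \<sigma> x < card (Ofix N \<sigma>)"
  unfolding rk_def by (rule psubset_card_mono) (use assms in auto)

lemma rk_img: "rk N \<sigma> ` Ofix N \<sigma> = {0..<card (Ofix N \<sigma>)}"
proof -
  have "rk N \<sigma> ` Ofix N \<sigma> \<subseteq> {0..<card (Ofix N \<sigma>)}" using rk_lt by auto
  moreover have "card (rk N \<sigma> ` Ofix N \<sigma>) = card {0..<card (Ofix N \<sigma>)}"
    using card_image[OF rk_inj] by simp
  ultimately show ?thesis by (simp add: card_subset_eq)
qed

lemma rho_prop: assumes "i < card (Ofix N \<sigma>)"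
  shows "rho N \<sigma> i \<in> Ofix N \<sigma>" "rk N \<sigma> (rho N \<sigma> i) = i"
proof -
  have "i \<in> rk N \<sigma> ` Ofix N \<sigma>" using assms rk_img by auto
  then show "rho N \<sigma> i \<in> Ofix N \<sigma>" "rk N \<sigma> (rho N \<sigma> i) = i"
    unfolding rho_def using the_inv_into_into[OF rk_inj] f_the_inv_into_f[OF rk_inj] by auto
qed

lemma rho_rk: assumes "x \<in> Ofix N \<sigma>" shows "rho N \<sigma> (rk N \<sigma> x) = x"
  unfolding rho_def using the_inv_into_f_f[OF rk_inj assms] .

lemma card_rk_lt: assumes "j \<le> card (Ofix N \<sigma>)" shows "card {x \<in> Ofix N \<sigma>. rk N \<sigma> x < j} = j"
proof -
  have "rk N \<sigma> ` {x \<in> Ofix N \<sigma>. rk N \<sigma> x < j} = {0..<j}"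
    using rk_img[of N \<sigma>] assms by (auto simp: image_iff) (metis atLeastLessThan_iff imageE le_trans less_le_not_le nat_le_linear zero_le  order.strict_trans2)
  moreover have "inj_on (rk N \<sigma>) {x \<in> Ofix N \<sigma>. rk N \<sigma> x < j}"
    by (rule inj_on_subset[OF rk_inj]) auto
  ultimately show ?thesis by (metis card_atLeastLessThan card_image diff_zero)
qed




lemma okinvD:
  assumes "okinv ns \<sigma>"
  shows "invol {1..sum_list ns} \<sigma>"
    "\<And>x. x \<in> {1..sum_list ns} \<Longrightarrow> \<sigma> x \<noteq> x \<Longrightarrow> \<not> same_interval ns x (\<sigma> x)"
    "\<And>i k. i < k \<Longrightarrow> k < \<sigma> i \<Longrightarrow> \<sigma> i < \<sigma> k \<Longrightarrow> False"
    "\<And>x y. \<sigma> x = x \<Longrightarrow> y < x \<Longrightarrow> x < \<sigma> y \<Longrightarrow> False"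
  using assms unfolding okinv_def by blast+

context
  fixes ns :: "nat list" and n j :: nat and \<sigma> :: "nat \<Rightarrow> nat"
  assumes ok: "okinv ns \<sigma>" and jO: "j \<le> card (Ofix (sum_list ns) \<sigma>)" and jn: "j \<le> n"
begin

abbreviation "NN \<equiv> sum_list ns"
abbreviation "Ox \<equiv> Ofix NN \<sigma>"
abbreviation "TT \<equiv> ext NN \<sigma> j"

lemma I1: "x \<notin> {1..NN} \<Longrightarrow> \<sigma> x = x"
  and I2: "x \<in> {1..NN} \<Longrightarrow> \<sigma> x \<in> {1..NN}"
  and I3: "\<sigma> (\<sigma> x) = x"
  using involD[OF okinvD(1)[OF ok]] by auto

lemma OO_iff: "x \<in> Ox \<longleftrightarrow> 1 \<le> x \<and> x \<le> NN \<and> \<sigma> x = x"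
  by (auto simp: Ofix_def)

lemma e1: "x \<in> Ox \<Longrightarrow> rk NN \<sigma> x < j \<Longrightarrow> TT x = NN + 1 + rk NN \<sigma> x"
  by (simp add: ext_def)

lemma e2: "NN < x \<Longrightarrow> x \<le> NN + j \<Longrightarrow> TT x = rho NN \<sigma> (x - NN - 1)"
  using OO_iff[of x] by (simp add: ext_def)

lemma e3: "\<not> (x \<in> Ox \<and> rk NN \<sigma> x < j) \<Longrightarrow> \<not> (NN < x \<and> x \<le> NN + j) \<Longrightarrow> TT x = \<sigma> x"
  unfolding ext_def by (rule trans[OF if_not_P if_not_P])

lemma rho_in: "NN < x \<Longrightarrow> x \<le> NN + j \<Longrightarrow> rho NN \<sigma> (x - NN - 1) \<in> Ox \<and> rk NN \<sigma> (rho NN \<sigma> (x - NN - 1)) = x - NN - 1"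
  using rho_prop[of "x - NN - 1" NN \<sigma>] jO by auto

lemma tt: "TT (TT x) = x"
proof -
  consider (a) "x \<in> Ox \<and> rk NN \<sigma> x < j" | (b) "NN < x \<and> x \<le> NN + j"
    | (c) "\<not> (x \<in> Ox \<and> rk NN \<sigma> x < j)" "\<not> (NN < x \<and> x \<le> NN + j)" by blast
  then show ?thesis
  proof cases
    case a
    then have "TT x = NN + 1 + rk NN \<sigma> x" using e1 by blast
    moreover have "TT (NN + 1 + rk NN \<sigma> x) = rho NN \<sigma> (rk NN \<sigma> x)" using a e2 by simp
    ultimately show ?thesis using rho_rk a by simp
  next
    case b
    then have t: "TT x = rho NN \<sigma> (x - NN - 1)" using e2 by blast
    have r: "rho NN \<sigma> (x - NN - 1) \<in> Ox" "rk NN \<sigma> (rho NN \<sigma> (x - NN - 1)) = x - NN - 1"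
      using rho_in b by auto
    have lt: "rk NN \<sigma> (rho NN \<sigma> (x - NN - 1)) < j" using r(2) b by linarith
    have "TT (rho NN \<sigma> (x - NN - 1)) = NN + 1 + (x - NN - 1)" using e1[OF r(1) lt] r(2) by simp
    then show ?thesis using t b by simp
  next
    case c
    then have t: "TT x = \<sigma> x" using e3 by blast
    have n1: "\<not> (\<sigma> x \<in> Ox \<and> rk NN \<sigma> (\<sigma> x) < j)"
    proof
      assume h: "\<sigma> x \<in> Ox \<and> rk NN \<sigma> (\<sigma> x) < j"
      then have "\<sigma> (\<sigma> x) = \<sigma> x" by (simp add: Ofix_def)
      then have "x = \<sigma> x" using I3 by simp
      then show False using h c by simp
    qed
    have n2: "\<not> (NN < \<sigma> x \<and> \<sigma> x \<le> NN + j)"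
    proof
      assume h: "NN < \<sigma> x \<and> \<sigma> x \<le> NN + j"
      then have "\<sigma> (\<sigma> x) = \<sigma> x" using I1 by simp
      then have "x = \<sigma> x" using I3 by simp
      then show False using h c by simp
    qed
    show ?thesis using t e3[OF n1 n2] I3 by simp
  qed
qed

lemma t_out: "x \<notin> {1..NN + n} \<Longrightarrow> TT x = x"
proof -
  assume h: "x \<notin> {1..NN + n}"
  have a: "x \<notin> Ox" using h by (auto simp: Ofix_def)
  have b: "\<not> (NN < x \<and> x \<le> NN + j)" using h jn by auto
  have "TT x = \<sigma> x" using e3 a b by blast
  moreover have "x \<notin> {1..NN}" using h by auto
  ultimately show ?thesis using I1 by simp
qed

lemma t_in: "x \<in> {1..NN + n} \<Longrightarrow> TT x \<in> {1..NN + n}"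
proof -
  assume h: "x \<in> {1..NN + n}"
  consider (a) "x \<in> Ox \<and> rk NN \<sigma> x < j" | (b) "NN < x \<and> x \<le> NN + j"
    | (c) "\<not> (x \<in> Ox \<and> rk NN \<sigma> x < j)" "\<not> (NN < x \<and> x \<le> NN + j)" by blast
  then show ?thesis
  proof cases
    case a then show ?thesis using e1 jn by auto
  next
    case b then show ?thesis using e2 rho_in[of x] OO_iff by auto
  next
    case c then have t: "TT x = \<sigma> x" using e3 by blast
    show ?thesis
    proof (cases "x \<le> NN")
      case True then show ?thesis using t h I2[of x] by auto
    next
      case False then show ?thesis using t h I1[of x] by auto
    qed
  qed
qed

lemma t_invol: "invol {1..NN + n} TT"
  unfolding invol_def using t_out t_in tt by blast

lemma sl: "sum_list (ns @ [n]) = NN + n" by simp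

lemma t_v3: "x \<in> {1..NN + n} \<Longrightarrow> TT x \<noteq> x \<Longrightarrow> \<not> same_interval (ns @ [n]) x (TT x)"
proof -
  assume h: "x \<in> {1..NN + n}" "TT x \<noteq> x"
  have tin: "TT x \<in> {1..NN + n}" using t_in h by blast
  have si: "same_interval (ns @ [n]) x (TT x) \<longleftrightarrow>
    (x \<le> NN \<and> TT x \<le> NN \<and> same_interval ns x (TT x)) \<or> (NN < x \<and> NN < TT x)"
    using SI[of x ns n "TT x"] h tin by auto
  consider (a) "x \<in> Ox \<and> rk NN \<sigma> x < j" | (b) "NN < x \<and> x \<le> NN + j"
    | (c) "\<not> (x \<in> Ox \<and> rk NN \<sigma> x < j)" "\<not> (NN < x \<and> x \<le> NN + j)" by blast
  then show ?thesis
  proof cases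
    case a then show ?thesis using si e1 OO_iff by auto
  next
    case b then show ?thesis using si e2 rho_in[of x] OO_iff by auto
  next
    case c then have t: "TT x = \<sigma> x" using e3 by blast
    then have xA: "x \<in> {1..NN}" using h I1 by (cases "x \<in> {1..NN}") auto
    then have "\<sigma> x \<in> {1..NN}" using I2 by auto
    then show ?thesis using si t okinvD(2)[OF ok xA] h xA by auto
  qed
qed

lemma t_v4: "i < k \<Longrightarrow> k < TT i \<Longrightarrow> TT i < TT k \<Longrightarrow> False"
proof -
  assume h: "i < k" "k < TT i" "TT i < TT k"
  consider (a) "i \<in> Ox \<and> rk NN \<sigma> i < j" | (b) "NN < i \<and> i \<le> NN + j"
    | (c) "\<not> (i \<in> Ox \<and> rk NN \<sigma> i < j)" "\<not> (NN < i \<and> i \<le> NN + j)" by blast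
  then show False
  proof cases
    case a
    then have ti: "TT i = NN + 1 + rk NN \<sigma> i" using e1 by blast
    consider (ka) "k \<in> Ox \<and> rk NN \<sigma> k < j" | (kb) "NN < k \<and> k \<le> NN + j"
      | (kc) "\<not> (k \<in> Ox \<and> rk NN \<sigma> k < j)" "\<not> (NN < k \<and> k \<le> NN + j)" by blast
    then show False
    proof cases
      case ka then show False using e1 rk_anti[of i NN \<sigma> k] a h ti by auto
    next
      case kb then show False using e2 rho_in[of k] OO_iff h by auto
    next
      case kc
      then have tk: "TT k = \<sigma> k" using e3 by blast
      show False
      proof (cases "k \<le> NN")
        case True
        then have "k \<in> {1..NN}" using h a OO_iff by auto
        then show False using I2[of k] tk h ti by auto
      next
        case False then show False using kc h ti a by auto
      qed
    qed
  next
    case b then show False using e2 rho_in[of i] OO_iff h by auto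
  next
    case c
    then have ti: "TT i = \<sigma> i" using e3 by blast
    consider (ka) "k \<in> Ox \<and> rk NN \<sigma> k < j" | (kb) "NN < k \<and> k \<le> NN + j"
      | (kc) "\<not> (k \<in> Ox \<and> rk NN \<sigma> k < j)" "\<not> (NN < k \<and> k \<le> NN + j)" by blast
    then show False
    proof cases
      case ka then show False using okinvD(4)[OF ok, of k i] OO_iff h ti by auto
    next
      case kb
      then have "TT k \<le> NN" using e2 rho_in[of k] OO_iff by auto
      then have "NN < \<sigma> i" using h kb ti by auto
      then have "i \<notin> {1..NN}" using I2[of i] by auto
      then show False using I1[of i] h ti by auto
    next
      case kc then show False using okinvD(3)[OF ok, of i k] h ti e3 by auto
    qed
  qed
qed

lemma t_v5: "TT x = x \<Longrightarrow> y < x \<Longrightarrow> x < TT y \<Longrightarrow> False"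
proof -
  assume h: "TT x = x" "y < x" "x < TT y"
  have nx1: "\<not> (x \<in> Ox \<and> rk NN \<sigma> x < j)" using h e1 OO_iff by fastforce
  have nx2: "\<not> (NN < x \<and> x \<le> NN + j)" using h e2 rho_in[of x] OO_iff by fastforce
  have sx: "\<sigma> x = x" using e3[OF nx1 nx2] h by simp
  consider (a) "y \<in> Ox \<and> rk NN \<sigma> y < j" | (b) "NN < y \<and> y \<le> NN + j"
    | (c) "\<not> (y \<in> Ox \<and> rk NN \<sigma> y < j)" "\<not> (NN < y \<and> y \<le> NN + j)" by blast
  then show False
  proof cases
    case a
    then have ty: "TT y = NN + 1 + rk NN \<sigma> y" using e1 by blast
    show False
    proof (cases "x \<le> NN")
      case True
      then have "x \<in> Ox" using sx h a OO_iff by auto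
      then have "rk NN \<sigma> x < rk NN \<sigma> y" using rk_anti[of y NN \<sigma> x] a h by auto
      then show False using nx1 \<open>x \<in> Ox\<close> a by auto
    next
      case False then show False using nx2 ty h a by auto
    qed
  next
    case b then show False using e2 rho_in[of y] OO_iff h by auto
  next
    case c then show False using okinvD(4)[OF ok sx h(2)] h e3 by auto
  qed
qed

lemma t_ok: "okinv (ns @ [n]) TT"
  unfolding okinv_def sl using t_invol t_v3 t_v4 t_v5 by blast

lemma t_restr: "restr NN TT = \<sigma>"
proof
  fix x
  show "restr NN TT x = \<sigma> x"
  proof (cases "x \<le> NN")
    case False
    then show ?thesis using I1[of x] by (auto simp: restr_def)
  next
    case True
    show ?thesis
    proof (cases "x \<in> Ox \<and> rk NN \<sigma> x < j")
      case True
      then show ?thesis using e1 OO_iff by (auto simp: restr_def)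
    next
      case False
      then have "TT x = \<sigma> x" using e3 \<open>x \<le> NN\<close> by auto
      moreover have "\<sigma> x \<le> NN" using I2[of x] I1[of x] True by (cases "x \<in> {1..NN}") auto
      ultimately show ?thesis using True by (auto simp: restr_def)
    qed
  qed
qed

lemma t_sing: "card {x \<in> {1..NN + n}. TT x = x} = card Ox + n - 2 * j"
proof -
  have eq: "{x \<in> {1..NN + n}. TT x = x} = (Ox - {x \<in> Ox. rk NN \<sigma> x < j}) \<union> {NN + j + 1..NN + n}"
  proof (intro set_eqI iffI)
    fix x assume x: "x \<in> {x \<in> {1..NN + n}. TT x = x}"
    have nx1: "\<not> (x \<in> Ox \<and> rk NN \<sigma> x < j)"
    proof
      assume a: "x \<in> Ox \<and> rk NN \<sigma> x < j"
      then have "TT x = NN + 1 + rk NN \<sigma> x" using e1 by blast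
      moreover have "x \<le> NN" using a by (simp add: Ofix_def)
      ultimately show False using x by simp
    qed
    have nx2: "\<not> (NN < x \<and> x \<le> NN + j)"
    proof
      assume a: "NN < x \<and> x \<le> NN + j"
      then have "TT x \<in> Ox" using e2 rho_in by simp
      then have "TT x \<le> NN" by (simp add: Ofix_def)
      then show False using x a by simp
    qed
    have sx: "\<sigma> x = x" using e3[OF nx1 nx2] x by simp
    show "x \<in> (Ox - {x \<in> Ox. rk NN \<sigma> x < j}) \<union> {NN + j + 1..NN + n}"
    proof (cases "x \<le> NN")
      case True
      then have "x \<in> Ox" using x sx by (simp add: Ofix_def)
      then show ?thesis using nx1 by blast
    next
      case False
      then show ?thesis using nx2 x by auto
    qed
  next
    fix x assume x: "x \<in> (Ox - {x \<in> Ox. rk NN \<sigma> x < j}) \<union> {NN + j + 1..NN + n}"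
    have nx1: "\<not> (x \<in> Ox \<and> rk NN \<sigma> x < j)" using x by (auto simp: Ofix_def)
    have nx2: "\<not> (NN < x \<and> x \<le> NN + j)" using x by (auto simp: Ofix_def)
    have xr: "x \<in> {1..NN + n}" using x by (auto simp: Ofix_def)
    have "\<sigma> x = x"
    proof (cases "x \<in> Ox")
      case True then show ?thesis by (simp add: Ofix_def)
    next
      case False
      then have "x \<notin> {1..NN}" using x by auto
      then show ?thesis using I1 by simp
    qed
    then show "x \<in> {x \<in> {1..NN + n}. TT x = x}" using e3[OF nx1 nx2] xr by simp
  qed
  have d: "(Ox - {x \<in> Ox. rk NN \<sigma> x < j}) \<inter> {NN + j + 1..NN + n} = {}" by (auto simp: Ofix_def)
  have sub: "{x \<in> Ox. rk NN \<sigma> x < j} \<subseteq> Ox" by blast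
  have c1: "card (Ox - {x \<in> Ox. rk NN \<sigma> x < j}) = card Ox - j"
    using card_Diff_subset[OF _ sub] card_rk_lt[OF jO] by simp
  have "card {x \<in> {1..NN + n}. TT x = x} = card (Ox - {x \<in> Ox. rk NN \<sigma> x < j}) + card {NN + j + 1..NN + n}"
    unfolding eq by (rule card_Un_disjoint[OF _ _ d]) auto
  also have "\<dots> = (card Ox - j) + (n - j)" using c1 by simp
  finally show ?thesis using jO jn by simp
qed

lemma t_prs: "card {x \<in> {1..NN + n}. x < TT x} = card {x \<in> {1..NN}. x < \<sigma> x} + j"
proof -
  have eq: "{x \<in> {1..NN + n}. x < TT x} = {x \<in> {1..NN}. x < \<sigma> x} \<union> {x \<in> Ox. rk NN \<sigma> x < j}"
  proof (intro set_eqI iffI)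
    fix x assume x: "x \<in> {x \<in> {1..NN + n}. x < TT x}"
    consider (a) "x \<in> Ox \<and> rk NN \<sigma> x < j" | (b) "NN < x \<and> x \<le> NN + j"
      | (c) "\<not> (x \<in> Ox \<and> rk NN \<sigma> x < j)" "\<not> (NN < x \<and> x \<le> NN + j)" by blast
    then show "x \<in> {x \<in> {1..NN}. x < \<sigma> x} \<union> {x \<in> Ox. rk NN \<sigma> x < j}"
    proof cases
      case a then show ?thesis by auto
    next
      case b then show ?thesis using x e2 rho_in[of x] OO_iff by auto
    next
      case c then have "TT x = \<sigma> x" using e3 by blast
      then show ?thesis using x I1[of x] by (cases "x \<in> {1..NN}") auto
    qed
  next
    fix x assume x: "x \<in> {x \<in> {1..NN}. x < \<sigma> x} \<union> {x \<in> Ox. rk NN \<sigma> x < j}"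
    then show "x \<in> {x \<in> {1..NN + n}. x < TT x}"
    proof
      assume "x \<in> {x \<in> {1..NN}. x < \<sigma> x}"
      moreover then have "\<not> (x \<in> Ox \<and> rk NN \<sigma> x < j)" "\<not> (NN < x \<and> x \<le> NN + j)" using OO_iff by auto
      ultimately show ?thesis using e3 by auto
    next
      assume "x \<in> {x \<in> Ox. rk NN \<sigma> x < j}"
      then show ?thesis using e1 OO_iff by auto
    qed
  qed
  have d: "{x \<in> {1..NN}. x < \<sigma> x} \<inter> {x \<in> Ox. rk NN \<sigma> x < j} = {}" using OO_iff by auto
  show ?thesis unfolding eq using card_Un_disjoint[OF _ _ d] card_rk_lt[OF jO] by simp
qed

end




lemma down_closed:
  fixes Y :: "nat set"
  assumes "finite Y" "Y \<subseteq> {a<..}" "\<And>y y'. y \<in> Y \<Longrightarrow> a < y' \<Longrightarrow> y' < y \<Longrightarrow> y' \<in> Y"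
  shows "Y = {a<..a + card Y}"
proof (cases "Y = {}")
  case True then show ?thesis by simp
next
  case False
  define m where "m = Max Y"
  have mY: "m \<in> Y" using Max_in[OF assms(1) False] m_def by simp
  have "Y = {a<..m}"
  proof
    show "Y \<subseteq> {a<..m}" using assms(1,2) m_def by auto
    show "{a<..m} \<subseteq> Y"
    proof
      fix y assume "y \<in> {a<..m}"
      then show "y \<in> Y" using mY assms(3)[of m y] by (cases "y = m") auto
    qed
  qed
  moreover then have "card Y = m - a" by simp
  moreover have "a < m" using mY assms(2) by auto
  ultimately show ?thesis by simp
qed

lemma ext_a: "x \<in> Ofix N \<sigma> \<Longrightarrow> rk N \<sigma> x < j \<Longrightarrow> ext N \<sigma> j x = N + 1 + rk N \<sigma> x"
  unfolding ext_def by (rule if_P) simp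

lemma ext_b: "N < x \<Longrightarrow> x \<le> N + j \<Longrightarrow> ext N \<sigma> j x = rho N \<sigma> (x - N - 1)"
proof -
  assume h: "N < x" "x \<le> N + j"
  then have "x \<notin> Ofix N \<sigma>" by (simp add: Ofix_def)
  then have "\<not> (x \<in> Ofix N \<sigma> \<and> rk N \<sigma> x < j)" by blast
  then show ?thesis unfolding ext_def using h by (subst if_not_P) auto
qed

lemma ext_c: "\<not> (x \<in> Ofix N \<sigma> \<and> rk N \<sigma> x < j) \<Longrightarrow> \<not> (N < x \<and> x \<le> N + j) \<Longrightarrow> ext N \<sigma> j x = \<sigma> x"
  unfolding ext_def by (rule trans[OF if_not_P if_not_P])

context
  fixes ns :: "nat list" and n :: nat and \<tau> :: "nat \<Rightarrow> nat"
  assumes ok: "okinv (ns @ [n]) \<tau>"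
begin

abbreviation "MM \<equiv> sum_list ns"
abbreviation "SS \<equiv> restr MM \<tau>"

lemma sl2: "sum_list (ns @ [n]) = MM + n" by simp

lemma J1: "x \<notin> {1..MM + n} \<Longrightarrow> \<tau> x = x"
  and J2: "x \<in> {1..MM + n} \<Longrightarrow> \<tau> x \<in> {1..MM + n}"
  and J3: "\<tau> (\<tau> x) = x"
  using involD[OF okinvD(1)[OF ok]] unfolding sl2 by auto

lemma J4: "x \<in> {1..MM + n} \<Longrightarrow> \<tau> x \<noteq> x \<Longrightarrow> \<not> same_interval (ns @ [n]) x (\<tau> x)"
  using okinvD(2)[OF ok] unfolding sl2 by blast

lemma J5: "i < k \<Longrightarrow> k < \<tau> i \<Longrightarrow> \<tau> i < \<tau> k \<Longrightarrow> False"
  using okinvD(3)[OF ok] by blast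

lemma J6: "\<tau> x = x \<Longrightarrow> y < x \<Longrightarrow> x < \<tau> y \<Longrightarrow> False"
  using okinvD(4)[OF ok] by blast

lemma s_eq1: "x \<le> MM \<Longrightarrow> \<tau> x \<le> MM \<Longrightarrow> SS x = \<tau> x"
  by (simp add: restr_def)

lemma s_eq2: "\<not> (x \<le> MM \<and> \<tau> x \<le> MM) \<Longrightarrow> SS x = x"
  unfolding restr_def by (rule if_not_P)

lemma J0: "\<tau> 0 = 0" using J1[of 0] by simp

lemma no_same_last: "MM < x \<Longrightarrow> x \<le> MM + n \<Longrightarrow> MM < \<tau> x \<Longrightarrow> \<tau> x = x"
proof (rule ccontr)
  assume h: "MM < x" "x \<le> MM + n" "MM < \<tau> x" "\<tau> x \<noteq> x"
  have "\<tau> x \<in> {1..MM + n}" using J2[of x] h by auto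
  then have "same_interval (ns @ [n]) x (\<tau> x)" using SI[of x ns n "\<tau> x"] h by auto
  then show False using J4[of x] h by auto
qed

lemma s_invol: "invol {1..MM} SS"
  unfolding invol_def
proof (intro conjI allI ballI impI)
  fix x assume "x \<notin> {1..MM}"
  then show "SS x = x" using J0 by (cases "x = 0") (auto simp: restr_def)
next
  fix x assume x: "x \<in> {1..MM}"
  show "SS x \<in> {1..MM}"
  proof (cases "\<tau> x \<le> MM")
    case True
    have "\<tau> x \<in> {1..MM + n}" using J2[of x] x by auto
    then show ?thesis using True x s_eq1[of x] by auto
  next
    case False then show ?thesis using x s_eq2[of x] by auto
  qed
next
  fix x show "SS (SS x) = x"
  proof (cases "x \<le> MM \<and> \<tau> x \<le> MM")
    case True
    then have "SS x = \<tau> x" using s_eq1 by blast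
    moreover have "SS (\<tau> x) = \<tau> (\<tau> x)" using True J3[of x] s_eq1[of "\<tau> x"] by simp
    ultimately show ?thesis using J3 by simp
  next
    case False
    then have "SS x = x" using s_eq2 by blast
    then show ?thesis by simp
  qed
qed

lemma s_ok: "okinv ns SS"
  unfolding okinv_def
proof (intro conjI s_invol ballI impI allI notI)
  fix x assume x: "x \<in> {1..MM}" "SS x \<noteq> x" "same_interval ns x (SS x)"
  then have c: "x \<le> MM \<and> \<tau> x \<le> MM" using s_eq2 by blast
  then have sx: "SS x = \<tau> x" using s_eq1 by blast
  have "\<tau> x \<in> {1..MM + n}" using J2[of x] x by auto
  then have "same_interval (ns @ [n]) x (\<tau> x)" using SI[of x ns n "\<tau> x"] x c sx by auto
  then show False using J4[of x] x sx by auto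
next
  fix i k assume h: "i < k \<and> k < SS i \<and> SS i < SS k"
  then have "SS i = \<tau> i" "SS k = \<tau> k" using s_eq2[of i] s_eq2[of k] s_eq1[of i] s_eq1[of k] by fastforce+
  then show False using J5[of i k] h by auto
next
  fix x y assume h: "SS x = x" "y < x" "x < SS y"
  then have cy: "y \<le> MM \<and> \<tau> y \<le> MM" using s_eq2[of y] by fastforce
  then have sy: "SS y = \<tau> y" using s_eq1 by blast
  have xM: "x \<le> MM" using h cy sy by auto
  show False
  proof (cases "\<tau> x \<le> MM")
    case True
    then have "\<tau> x = x" using s_eq1[OF xM True] h by simp
    then show False using J6[of x y] h sy by auto
  next
    case False
    then show False using J5[of y x] h sy cy by auto
  qed
qed

definition "XX = {x \<in> {1..MM}. MM < \<tau> x}"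
definition "jj = card XX"

lemma XX_fin: "finite XX" by (simp add: XX_def)

lemma c0: "XX \<subseteq> Ofix MM SS"
  unfolding XX_def Ofix_def using s_eq2 by auto

lemma c1: "x \<in> XX \<Longrightarrow> w \<in> Ofix MM SS \<Longrightarrow> x < w \<Longrightarrow> w \<in> XX"
proof (rule ccontr)
  assume h: "x \<in> XX" "w \<in> Ofix MM SS" "x < w" "w \<notin> XX"
  then have w: "w \<in> {1..MM}" "SS w = w" by (auto simp: Ofix_def)
  then have "\<tau> w \<le> MM" using h by (auto simp: XX_def)
  then have "\<tau> w = w" using s_eq1[of w] w by simp
  moreover have "w < \<tau> x" using h w by (auto simp: XX_def)
  ultimately show False using J6[of w x] h by simp
qed

lemma c2: "x \<in> XX \<Longrightarrow> x' \<in> XX \<Longrightarrow> x < x' \<Longrightarrow> \<tau> x' < \<tau> x"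
proof (rule ccontr)
  assume h: "x \<in> XX" "x' \<in> XX" "x < x'" "\<not> \<tau> x' < \<tau> x"
  have "\<tau> x \<noteq> \<tau> x'"
  proof
    assume "\<tau> x = \<tau> x'"
    then have "\<tau> (\<tau> x) = \<tau> (\<tau> x')" by simp
    then show False using J3[of x] J3[of x'] h by simp
  qed
  then have "\<tau> x < \<tau> x'" using h by simp
  moreover have "x' < \<tau> x" using h by (auto simp: XX_def)
  ultimately show False using J5[of x x'] h by simp
qed

lemma inj_XX: "inj_on \<tau> XX"
  by (rule inj_onI) (metis J3)

lemma c3: "\<tau> ` XX = {MM<..MM + jj}"
proof -
  have "\<tau> ` XX = {MM<..MM + card (\<tau> ` XX)}"
  proof (rule down_closed)
    show "finite (\<tau> ` XX)" using XX_fin by simp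
    show "\<tau> ` XX \<subseteq> {MM<..}" by (auto simp: XX_def)
    fix y y' assume h: "y \<in> \<tau> ` XX" "MM < y'" "y' < y"
    then obtain x where x: "x \<in> XX" "y = \<tau> x" by auto
    have yr: "y \<le> MM + n" using J2[of x] x by (auto simp: XX_def)
    show "y' \<in> \<tau> ` XX"
    proof (cases "\<tau> y' \<le> MM")
      case True
      have "\<tau> y' \<in> {1..MM + n}" using J2[of y'] h yr by auto
      then have "\<tau> y' \<in> XX" using True J3[of y'] h by (auto simp: XX_def)
      then show ?thesis using J3[of y'] by (metis image_eqI)
    next
      case False
      then have "\<tau> y' = y'" using no_same_last[of y'] h yr by auto
      moreover have "x < y'" using x h by (auto simp: XX_def)
      ultimately show ?thesis using J6[of y' x] h x by auto
    qed
  qed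
  then show ?thesis using card_image[OF inj_XX] by (simp add: jj_def)
qed

lemma jj_n: "jj \<le> n"
proof -
  have "\<tau> ` XX \<subseteq> {1..MM + n}" using J2 by (auto simp: XX_def)
  then have "{MM<..MM + jj} \<subseteq> {1..MM + n}" using c3 by simp
  then show ?thesis
    by (cases "jj = 0") (auto simp: subset_iff dest: spec[of _ "MM + jj"])
qed

lemma jj_O: "jj \<le> card (Ofix MM SS)"
  unfolding jj_def using c0 by (simp add: card_mono)

lemma c4: "x \<in> XX \<Longrightarrow> rk MM SS x = \<tau> x - MM - 1"
proof -
  assume x: "x \<in> XX"
  have e1: "{w \<in> Ofix MM SS. x < w} = {w \<in> XX. x < w}" using c0 c1[OF x] by auto
  have e2: "\<tau> ` {w \<in> XX. x < w} = {y \<in> \<tau> ` XX. y < \<tau> x}"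
  proof
    show "\<tau> ` {w \<in> XX. x < w} \<subseteq> {y \<in> \<tau> ` XX. y < \<tau> x}" using c2[OF x] by auto
    show "{y \<in> \<tau> ` XX. y < \<tau> x} \<subseteq> \<tau> ` {w \<in> XX. x < w}"
    proof
      fix y assume "y \<in> {y \<in> \<tau> ` XX. y < \<tau> x}"
      then obtain w where w: "w \<in> XX" "y = \<tau> w" "\<tau> w < \<tau> x" by auto
      then have "x < w" using c2[OF w(1) x] by (cases x w rule: linorder_cases) auto
      then show "y \<in> \<tau> ` {w \<in> XX. x < w}" using w by auto
    qed
  qed
  have tx: "\<tau> x \<in> {MM<..MM + jj}" using c3 x by auto
  have e3: "{y \<in> \<tau> ` XX. y < \<tau> x} = {MM<..<\<tau> x}" unfolding c3 using tx by auto
  have "rk MM SS x = card {w \<in> XX. x < w}" unfolding rk_def e1 ..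
  also have "\<dots> = card (\<tau> ` {w \<in> XX. x < w})"
    by (rule card_image[symmetric], rule inj_on_subset[OF inj_XX]) auto
  also have "\<dots> = \<tau> x - MM - 1" unfolding e2 e3 by simp
  finally show ?thesis .
qed

lemma c5: "x \<in> Ofix MM SS \<Longrightarrow> x \<notin> XX \<Longrightarrow> jj \<le> rk MM SS x"
proof -
  assume x: "x \<in> Ofix MM SS" "x \<notin> XX"
  have "XX \<subseteq> {w \<in> Ofix MM SS. x < w}"
  proof
    fix x' assume x': "x' \<in> XX"
    have "\<not> x' < x" using c1[OF x' x(1)] x(2) by blast
    moreover have "x' \<noteq> x" using x x' by blast
    ultimately show "x' \<in> {w \<in> Ofix MM SS. x < w}" using c0 x' by auto
  qed
  then show ?thesis unfolding jj_def rk_def by (simp add: card_mono)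
qed

lemma t_is_ext: "\<tau> = ext MM SS jj"
proof
  fix x
  consider (a) "x \<in> Ofix MM SS \<and> rk MM SS x < jj" | (b) "MM < x \<and> x \<le> MM + jj"
    | (c) "\<not> (x \<in> Ofix MM SS \<and> rk MM SS x < jj)" "\<not> (MM < x \<and> x \<le> MM + jj)" by blast
  then show "\<tau> x = ext MM SS jj x"
  proof cases
    case a
    have xX: "x \<in> XX"
    proof (rule ccontr)
      assume "x \<notin> XX"
      then have "jj \<le> rk MM SS x" using c5 a by blast
      then show False using a by simp
    qed
    then have "MM < \<tau> x" by (simp add: XX_def)
    moreover have "ext MM SS jj x = MM + 1 + rk MM SS x" using a ext_a by blast
    ultimately show ?thesis using c4[OF xX] by simp
  next
    case b
    then have "x \<in> \<tau> ` XX" using c3 by auto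
    then obtain z where z: "z \<in> XX" "x = \<tau> z" by auto
    have tz: "\<tau> x = z" using z J3 by simp
    have "rk MM SS z = x - MM - 1" using c4[OF z(1)] z by simp
    moreover have "z \<in> Ofix MM SS" using c0 z by blast
    ultimately have "rho MM SS (x - MM - 1) = z" using rho_rk[of z MM SS] by simp
    moreover have "ext MM SS jj x = rho MM SS (x - MM - 1)" using b ext_b by blast
    ultimately show ?thesis using tz by simp
  next
    case c
    have ex: "ext MM SS jj x = SS x" using ext_c[OF c] .
    show ?thesis
    proof (cases "x \<le> MM")
      case True
      show ?thesis
      proof (cases "\<tau> x \<le> MM")
        case True
        then show ?thesis using ex s_eq1 \<open>x \<le> MM\<close> by simp
      next
        case False
        then have x0: "x \<noteq> 0" using J0 by (cases "x = 0") auto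
        then have xX: "x \<in> XX" using False True by (simp add: XX_def)
        have "\<tau> x \<in> {MM<..MM + jj}" using c3 xX by blast
        then have "rk MM SS x < jj" using c4[OF xX] by auto
        moreover have "x \<in> Ofix MM SS" using c0 xX by blast
        ultimately show ?thesis using c by blast
      qed
    next
      case False
      then have sx: "SS x = x" using s_eq2 by blast
      show ?thesis
      proof (cases "x \<le> MM + n")
        case False
        then have "\<tau> x = x" using J1[of x] by simp
        then show ?thesis using ex sx by simp
      next
        case True
        show ?thesis
        proof (cases "\<tau> x \<le> MM")
          case True
          have "\<tau> x \<in> {1..MM + n}" using J2[of x] \<open>x \<le> MM + n\<close> \<open>\<not> x \<le> MM\<close> by auto
          then have "\<tau> x \<in> XX" using True J3[of x] \<open>\<not> x \<le> MM\<close> by (auto simp: XX_def)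
          then have "x \<in> \<tau> ` XX" using J3[of x] by (metis image_eqI)
          then have "x \<le> MM + jj" using c3 by auto
          then show ?thesis using c \<open>\<not> x \<le> MM\<close> by simp
        next
          case False
          then have "\<tau> x = x" using no_same_last[of x] \<open>x \<le> MM + n\<close> \<open>\<not> x \<le> MM\<close> by simp
          then show ?thesis using ex sx by simp
        qed
      qed
    qed
  qed
qed


lemma C_sum: "okinv ns SS \<and> (\<exists>j. j \<le> card (Ofix MM SS) \<and> j \<le> n \<and> \<tau> = ext MM SS j)"
  using s_ok jj_O jj_n t_is_ext by blast

end




lemma C_sum': "okinv (ns @ [n]) \<tau> \<Longrightarrow> okinv ns (restr (sum_list ns) \<tau>) \<and>
   (\<exists>j. j \<le> card (Ofix (sum_list ns) (restr (sum_list ns) \<tau>)) \<and> j \<le> n \<and> \<tau> = ext (sum_list ns) (restr (sum_list ns) \<tau>) j)"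
  by (rule C_sum)

definition prs :: "nat \<Rightarrow> (nat \<Rightarrow> nat) \<Rightarrow> nat" where
  "prs N \<sigma> = card {x \<in> {1..N}. x < \<sigma> x}"

definition FF :: "real \<Rightarrow> nat list \<Rightarrow> real poly" where
  "FF t ns = (\<Sum>\<sigma>\<in>{\<sigma>. okinv ns \<sigma>}. smult (t ^ prs (sum_list ns) \<sigma>) (chebU (card (Ofix (sum_list ns) \<sigma>)) t))"

lemma Ofix_card: "card (Ofix N \<sigma>) = card {x \<in> {1..N}. \<sigma> x = x}"
  by (simp add: Ofix_def)

lemma LHS_eq: "(\<Sum>p\<in>{p \<in> NC12 ns. inner_singles p = 0}. smult (t ^ pairs p) (chebU (singles p) t)) = FF t ns"
proof -
  have "(\<Sum>p\<in>{p \<in> NC12 ns. inner_singles p = 0}. smult (t ^ pairs p) (chebU (singles p) t))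
     = (\<Sum>\<sigma>\<in>{\<sigma>. okinv ns \<sigma>}. smult (t ^ pairs (Pa \<sigma> {1..sum_list ns})) (chebU (singles (Pa \<sigma> {1..sum_list ns})) t))"
    unfolding V_eq by (rule sum.reindex[OF inj_Pa_ok, unfolded comp_def])
  also have "\<dots> = FF t ns"
    unfolding FF_def
  proof (rule sum.cong[OF refl])
    fix \<sigma> assume "\<sigma> \<in> {\<sigma>. okinv ns \<sigma>}"
    then have i: "invol {1..sum_list ns} \<sigma>" by (simp add: okinv_def)
    show "smult (t ^ pairs (Pa \<sigma> {1..sum_list ns})) (chebU (singles (Pa \<sigma> {1..sum_list ns})) t)
      = smult (t ^ prs (sum_list ns) \<sigma>) (chebU (card (Ofix (sum_list ns) \<sigma>)) t)"
      using T6p[OF i] T6s[OF i] by (simp add: prs_def Ofix_card)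
  qed
  finally show ?thesis .
qed

lemma okinv_Nil: "okinv [] \<sigma> \<longleftrightarrow> \<sigma> = id"
proof
  assume "okinv [] \<sigma>"
  then have "invol {} \<sigma>" by (simp add: okinv_def)
  then show "\<sigma> = id" by (auto simp: invol_def)
next
  assume "\<sigma> = id"
  then show "okinv [] \<sigma>" by (auto simp: okinv_def invol_def)
qed

lemma FF_Nil: "FF t [] = 1"
proof -
  have "{\<sigma>. okinv [] \<sigma>} = {id}" using okinv_Nil by auto
  then show ?thesis by (simp add: FF_def Ofix_def prs_def)
qed

lemma FF_snoc: "FF t (ns @ [n]) = FF t ns * chebU n t"
proof -
  let ?N = "sum_list ns"
  let ?S = "SIGMA \<sigma>:{\<sigma>. okinv ns \<sigma>}. {0..min (card (Ofix ?N \<sigma>)) n}"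
  let ?h = "\<lambda>(\<sigma>, j). ext ?N \<sigma> j"
  let ?g = "\<lambda>\<tau>. smult (t ^ prs (?N + n) \<tau>) (chebU (card (Ofix (?N + n) \<tau>)) t)"
  have bij: "bij_betw ?h ?S {\<tau>. okinv (ns @ [n]) \<tau>}"
  proof (rule bij_betw_imageI)
    show "inj_on ?h ?S"
    proof (rule inj_onI, clarify)
      fix \<sigma> j \<sigma>' j'
      assume h: "okinv ns \<sigma>" "j \<in> {0..min (card (Ofix ?N \<sigma>)) n}"
        "okinv ns \<sigma>'" "j' \<in> {0..min (card (Ofix ?N \<sigma>')) n}"
        "ext ?N \<sigma> j = ext ?N \<sigma>' j'"
      have j1: "j \<le> card (Ofix ?N \<sigma>)" "j \<le> n" using h(2) by auto
      have j2: "j' \<le> card (Ofix ?N \<sigma>')" "j' \<le> n" using h(4) by auto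
      have r1: "restr ?N (ext ?N \<sigma> j) = \<sigma>" by (rule t_restr[OF h(1) j1])
      have r2: "restr ?N (ext ?N \<sigma>' j') = \<sigma>'" by (rule t_restr[OF h(3) j2])
      have "restr ?N (ext ?N \<sigma> j) = restr ?N (ext ?N \<sigma>' j')" by (simp only: h(5))
      then have s: "\<sigma> = \<sigma>'" by (simp only: r1 r2)
      have p1: "prs (?N + n) (ext ?N \<sigma> j) = prs ?N \<sigma> + j" unfolding prs_def by (rule t_prs[OF h(1) j1])
      have p2: "prs (?N + n) (ext ?N \<sigma>' j') = prs ?N \<sigma>' + j'" unfolding prs_def by (rule t_prs[OF h(3) j2])
      have "prs (?N + n) (ext ?N \<sigma> j) = prs (?N + n) (ext ?N \<sigma>' j')" by (simp only: h(5))
      then have "prs ?N \<sigma> + j = prs ?N \<sigma>' + j'" by (simp only: p1 p2)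
      then show "\<sigma> = \<sigma>' \<and> j = j'" using s by simp
    qed
    show "?h ` ?S = {\<tau>. okinv (ns @ [n]) \<tau>}"
    proof
      show "?h ` ?S \<subseteq> {\<tau>. okinv (ns @ [n]) \<tau>}"
      proof
        fix y assume "y \<in> ?h ` ?S"
        then obtain \<sigma> j where h: "okinv ns \<sigma>" "j \<le> card (Ofix ?N \<sigma>)" "j \<le> n" "y = ext ?N \<sigma> j" by auto
        show "y \<in> {\<tau>. okinv (ns @ [n]) \<tau>}" using t_ok[OF h(1-3)] h(4) by simp
      qed
      show "{\<tau>. okinv (ns @ [n]) \<tau>} \<subseteq> ?h ` ?S"
      proof
        fix \<tau> assume "\<tau> \<in> {\<tau>. okinv (ns @ [n]) \<tau>}"
        then have "okinv (ns @ [n]) \<tau>" by simp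
        from C_sum'[OF this] obtain j where
          j: "okinv ns (restr ?N \<tau>)" "j \<le> card (Ofix ?N (restr ?N \<tau>))" "j \<le> n" "\<tau> = ext ?N (restr ?N \<tau>) j"
          by blast
        have mem: "(restr ?N \<tau>, j) \<in> ?S" using j(1-3) by simp
        have eq: "\<tau> = ?h (restr ?N \<tau>, j)" using j(4) by (simp only: prod.case)
        show "\<tau> \<in> ?h ` ?S" using image_eqI[of \<tau> ?h "(restr ?N \<tau>, j)" ?S, OF eq mem] .
      qed
    qed
  qed
  have "FF t (ns @ [n]) = sum ?g {\<tau>. okinv (ns @ [n]) \<tau>}" by (simp add: FF_def)
  also have "\<dots> = sum (\<lambda>x. ?g (?h x)) ?S" by (rule sum.reindex_bij_betw[symmetric, OF bij])
  also have "\<dots> = sum (\<lambda>(\<sigma>, j). ?g (ext ?N \<sigma> j)) ?S" by (rule sum.cong) auto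
  also have "\<dots> = (\<Sum>\<sigma>\<in>{\<sigma>. okinv ns \<sigma>}. \<Sum>j\<in>{0..min (card (Ofix ?N \<sigma>)) n}. ?g (ext ?N \<sigma> j))"
    by (rule sum.Sigma[symmetric]) (auto simp: finite_okinv)
  also have "\<dots> = (\<Sum>\<sigma>\<in>{\<sigma>. okinv ns \<sigma>}. smult (t ^ prs ?N \<sigma>) (chebU (card (Ofix ?N \<sigma>)) t) * chebU n t)"
  proof (rule sum.cong[OF refl])
    fix \<sigma> assume "\<sigma> \<in> {\<sigma>. okinv ns \<sigma>}"
    then have ok: "okinv ns \<sigma>" by simp
    have "(\<Sum>j\<in>{0..min (card (Ofix ?N \<sigma>)) n}. ?g (ext ?N \<sigma> j))
        = (\<Sum>j\<in>{0..min (card (Ofix ?N \<sigma>)) n}. smult (t ^ prs ?N \<sigma>) (smult (t ^ j) (chebU (card (Ofix ?N \<sigma>) + n - 2 * j) t)))"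
    proof (rule sum.cong[OF refl])
      fix j assume j: "j \<in> {0..min (card (Ofix ?N \<sigma>)) n}"
      have j1: "j \<le> card (Ofix ?N \<sigma>)" "j \<le> n" using j by auto
      have p: "prs (?N + n) (ext ?N \<sigma> j) = prs ?N \<sigma> + j" unfolding prs_def by (rule t_prs[OF ok j1])
      have s: "card (Ofix (?N + n) (ext ?N \<sigma> j)) = card (Ofix ?N \<sigma>) + n - 2 * j"
        unfolding Ofix_def by (rule t_sing[OF ok j1, unfolded Ofix_def])
      show "?g (ext ?N \<sigma> j) = smult (t ^ prs ?N \<sigma>) (smult (t ^ j) (chebU (card (Ofix ?N \<sigma>) + n - 2 * j) t))"
        using p s by (simp add: power_add)
    qed
    also have "\<dots> = smult (t ^ prs ?N \<sigma>) (chebU (card (Ofix ?N \<sigma>)) t * chebU n t)"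
      by (simp add: chebU_lin smult_sum_right)
    finally show "(\<Sum>j\<in>{0..min (card (Ofix ?N \<sigma>)) n}. ?g (ext ?N \<sigma> j))
       = smult (t ^ prs ?N \<sigma>) (chebU (card (Ofix ?N \<sigma>)) t) * chebU n t" by simp
  qed
  also have "\<dots> = FF t ns * chebU n t" by (simp add: FF_def sum_distrib_right)
  finally show ?thesis .
qed

lemma prod_FF: "(\<Prod>j\<leftarrow>ns. chebU j t) = FF t ns"
proof (induction ns rule: rev_induct)
  case Nil then show ?case by (simp add: FF_Nil)
next
  case (snoc n ns) then show ?case by (simp add: FF_snoc)
qed




lemma pair_count: assumes "invol {1..N} \<sigma>" shows "2 * prs N \<sigma> + card (Ofix N \<sigma>) = N"
proof -
  have I2: "\<And>x. x \<in> {1..N} \<Longrightarrow> \<sigma> x \<in> {1..N}" and I3: "\<And>x. \<sigma> (\<sigma> x) = x"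
    using involD[OF assms] by blast+
  define L where "L = {x \<in> {1..N}. x < \<sigma> x}"
  define F where "F = {x \<in> {1..N}. \<sigma> x = x}"
  define G where "G = {x \<in> {1..N}. \<sigma> x < x}"
  have u: "{1..N} = L \<union> F \<union> G" unfolding L_def F_def G_def by auto
  have img: "\<sigma> ` L = G"
  proof
    show "\<sigma> ` L \<subseteq> G"
    proof
      fix y assume "y \<in> \<sigma> ` L"
      then obtain x where x: "x \<in> L" "y = \<sigma> x" by blast
      then have "x \<in> {1..N}" "x < \<sigma> x" unfolding L_def by auto
      then show "y \<in> G" unfolding G_def using x(2) I2[of x] I3[of x] by simp
    qed
    show "G \<subseteq> \<sigma> ` L"
    proof
      fix x assume x: "x \<in> G"
      then have "x \<in> {1..N}" "\<sigma> x < x" unfolding G_def by auto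
      then have "\<sigma> x \<in> L" unfolding L_def using I2[of x] I3[of x] by simp
      moreover have "x = \<sigma> (\<sigma> x)" using I3[of x] by simp
      ultimately show "x \<in> \<sigma> ` L" by blast
    qed
  qed
  have inj: "inj_on \<sigma> L"
  proof (rule inj_onI)
    fix x y assume "\<sigma> x = \<sigma> y"
    then have "\<sigma> (\<sigma> x) = \<sigma> (\<sigma> y)" by simp
    then show "x = y" using I3[of x] I3[of y] by simp
  qed
  have cG: "card G = card L" using card_image[OF inj] img by simp
  have d1: "(L \<union> F) \<inter> G = {}" unfolding L_def F_def G_def by auto
  have d2: "L \<inter> F = {}" unfolding L_def F_def by auto
  have fL: "finite L" "finite F" "finite G" unfolding L_def F_def G_def by auto
  have "card {1..N} = card (L \<union> F) + card G"
    unfolding u using card_Un_disjoint[OF _ _ d1] fL by simp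
  also have "card (L \<union> F) = card L + card F" using card_Un_disjoint[OF _ _ d2] fL by simp
  finally have "N = card L + card F + card G" by simp
  then show ?thesis using cG unfolding prs_def Ofix_def L_def F_def by simp
qed

lemma NC2_card: "card (NC2 (ns @ [m])) = card {\<sigma>. okinv ns \<sigma> \<and> card (Ofix (sum_list ns) \<sigma>) = m}"
proof -
  let ?N = "sum_list ns"
  let ?T = "{\<tau>. okinv (ns @ [m]) \<tau> \<and> (\<forall>x\<in>{1..sum_list (ns @ [m])}. \<tau> x \<noteq> x)}"
  let ?D = "{\<sigma>. okinv ns \<sigma> \<and> card (Ofix (sum_list ns) \<sigma>) = m}"
  have c1: "card (NC2 (ns @ [m])) = card ?T"
    unfolding NC2_eq by (rule card_image, rule inj_on_subset[OF inj_Pa_ok]) auto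
  have bij: "bij_betw (\<lambda>\<sigma>. ext ?N \<sigma> m) ?D ?T"
  proof (rule bij_betw_imageI)
    show "inj_on (\<lambda>\<sigma>. ext ?N \<sigma> m) ?D"
    proof (rule inj_onI)
      fix \<sigma> \<sigma>' assume h: "\<sigma> \<in> ?D" "\<sigma>' \<in> ?D" "ext ?N \<sigma> m = ext ?N \<sigma>' m"
      have r1: "restr ?N (ext ?N \<sigma> m) = \<sigma>" by (rule t_restr) (use h in auto)
      have r2: "restr ?N (ext ?N \<sigma>' m) = \<sigma>'" by (rule t_restr) (use h in auto)
      have "restr ?N (ext ?N \<sigma> m) = restr ?N (ext ?N \<sigma>' m)" by (simp only: h(3))
      then show "\<sigma> = \<sigma>'" by (simp only: r1 r2)
    qed
    show "(\<lambda>\<sigma>. ext ?N \<sigma> m) ` ?D = ?T"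
    proof
      show "(\<lambda>\<sigma>. ext ?N \<sigma> m) ` ?D \<subseteq> ?T"
      proof
        fix y assume "y \<in> (\<lambda>\<sigma>. ext ?N \<sigma> m) ` ?D"
        then obtain \<sigma> where s: "okinv ns \<sigma>" "card (Ofix ?N \<sigma>) = m" "y = ext ?N \<sigma> m" by auto
        have j: "m \<le> card (Ofix ?N \<sigma>)" "m \<le> m" using s by auto
        have ok: "okinv (ns @ [m]) y" using t_ok[OF s(1) j] s(3) by simp
        have "card {x \<in> {1..?N + m}. ext ?N \<sigma> m x = x} = card (Ofix ?N \<sigma>) + m - 2 * m"
          by (rule t_sing[OF s(1) j])
        then have "card {x \<in> {1..?N + m}. y x = x} = 0" using s by simp
        then have "{x \<in> {1..?N + m}. y x = x} = {}" by simp
        then show "y \<in> ?T" using ok by auto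
      qed
      show "?T \<subseteq> (\<lambda>\<sigma>. ext ?N \<sigma> m) ` ?D"
      proof
        fix \<tau> assume "\<tau> \<in> ?T"
        then have t: "okinv (ns @ [m]) \<tau>" "\<forall>x\<in>{1..?N + m}. \<tau> x \<noteq> x" by auto
        from C_sum'[OF t(1)] obtain j where
          j: "okinv ns (restr ?N \<tau>)" "j \<le> card (Ofix ?N (restr ?N \<tau>))" "j \<le> m" "\<tau> = ext ?N (restr ?N \<tau>) j"
          by blast
        have cs: "card {x \<in> {1..?N + m}. ext ?N (restr ?N \<tau>) j x = x} = card (Ofix ?N (restr ?N \<tau>)) + m - 2 * j"
          by (rule t_sing[OF j(1-3)])
        have "{x \<in> {1..?N + m}. ext ?N (restr ?N \<tau>) j x = x} = {}"
          using t(2) j(4) by (metis (mono_tags, lifting) empty_Collect_eq)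
        then have "card {x \<in> {1..?N + m}. ext ?N (restr ?N \<tau>) j x = x} = 0" by (simp only: card.empty)
        then have "card (Ofix ?N (restr ?N \<tau>)) + m - 2 * j = 0" using cs by linarith
        then have jm: "j = m" "card (Ofix ?N (restr ?N \<tau>)) = m" using j(2,3) by auto
        have mem: "restr ?N \<tau> \<in> ?D" using j(1) jm by simp
        have eq: "\<tau> = ext ?N (restr ?N \<tau>) m" using j(4) jm(1) by simp
        show "\<tau> \<in> (\<lambda>\<sigma>. ext ?N \<sigma> m) ` ?D" using image_eqI[of \<tau> "\<lambda>\<sigma>. ext ?N \<sigma> m" "restr ?N \<tau>" ?D, OF eq mem] .
      qed
    qed
  qed
  show ?thesis using c1 bij_betw_same_card[OF bij] by simp
qed

lemma second_form:
  assumes "t > 0"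
  shows "FF t ns = (\<Sum>m = 0..sum_list ns.
                smult (t powr ((real (sum_list ns) - real m) / 2) * real (card (NC2 (ns @ [m]))))
                      (chebU m t))"
proof -
  let ?N = "sum_list ns"
  let ?h = "\<lambda>\<sigma>. smult (t ^ prs ?N \<sigma>) (chebU (card (Ofix ?N \<sigma>)) t)"
  have "FF t ns = (\<Sum>m\<in>{0..?N}. sum ?h {\<sigma>. \<sigma> \<in> {\<sigma>. okinv ns \<sigma>} \<and> card (Ofix ?N \<sigma>) = m})"
    unfolding FF_def
  proof (rule sum.group[symmetric])
    show "finite {\<sigma>. okinv ns \<sigma>}" by (rule finite_okinv)
    show "finite {0..?N}" by simp
    show "(\<lambda>\<sigma>. card (Ofix ?N \<sigma>)) ` {\<sigma>. okinv ns \<sigma>} \<subseteq> {0..?N}"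
    proof
      fix k assume "k \<in> (\<lambda>\<sigma>. card (Ofix ?N \<sigma>)) ` {\<sigma>. okinv ns \<sigma>}"
      then obtain \<sigma> where "k = card (Ofix ?N \<sigma>)" by auto
      moreover have "Ofix ?N \<sigma> \<subseteq> {1..?N}" by (auto simp: Ofix_def)
      then have "card (Ofix ?N \<sigma>) \<le> card {1..?N}" by (rule card_mono[rotated]) simp
      then have "k \<le> card {1..?N}" using \<open>k = card (Ofix ?N \<sigma>)\<close> by simp
      then show "k \<in> {0..?N}" by simp
    qed
  qed
  also have "\<dots> = (\<Sum>m = 0..?N.
                smult (t powr ((real ?N - real m) / 2) * real (card (NC2 (ns @ [m])))) (chebU m t))"
  proof (rule sum.cong[OF refl])
    fix m assume m: "m \<in> {0..?N}"
    let ?D = "{\<sigma>. \<sigma> \<in> {\<sigma>. okinv ns \<sigma>} \<and> card (Ofix ?N \<sigma>) = m}"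
    have "sum ?h ?D = (\<Sum>\<sigma>\<in>?D. smult (t powr ((real ?N - real m) / 2)) (chebU m t))"
    proof (rule sum.cong[OF refl])
      fix \<sigma> assume s: "\<sigma> \<in> ?D"
      then have "invol {1..?N} \<sigma>" by (simp add: okinv_def)
      then have pc: "2 * prs ?N \<sigma> + m = ?N" using pair_count s by auto
      then have "real (2 * prs ?N \<sigma> + m) = real ?N" by simp
      then have "2 * real (prs ?N \<sigma>) + real m = real ?N" by simp
      then have "real (prs ?N \<sigma>) = (real ?N - real m) / 2" by (simp add: field_simps)
      then have "t ^ prs ?N \<sigma> = t powr ((real ?N - real m) / 2)" using powr_realpow[OF assms] by metis
      then show "?h \<sigma> = smult (t powr ((real ?N - real m) / 2)) (chebU m t)" using s by simp
    qed
    also have "\<dots> = smult (real (card ?D) * t powr ((real ?N - real m) / 2)) (chebU m t)"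
      by (subst smult_sum[symmetric]) simp
    also have "card ?D = card (NC2 (ns @ [m]))" using NC2_card[of ns m] by simp
    finally show "sum ?h ?D = smult (t powr ((real ?N - real m) / 2) * real (card (NC2 (ns @ [m])))) (chebU m t)"
      by (simp add: mult.commute)
  qed
  finally show ?thesis .
qed

theorem mainTheorem9:
  fixes t :: real and ns :: "nat list"
  assumes "t > 0"
  shows "(\<Prod>j\<leftarrow>ns. chebU j t)
           = (\<Sum>p\<in>{p \<in> NC12 ns. inner_singles p = 0}. smult (t ^ pairs p) (chebU (singles p) t))
       \<and> (\<Prod>j\<leftarrow>ns. chebU j t)
           = (\<Sum>m = 0..sum_list ns.
                smult (t powr ((real (sum_list ns) - real m) / 2) * real (card (NC2 (ns @ [m]))))
                      (chebU m t))"
  using prod_FF[where ns=ns and t=t] LHS_eq[where ns=ns and t=t] second_form[OF assms, where ns=ns] by simp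


end
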